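(* There is an absolute constant $C>0$ such that every Hamming-trigraph with sensitivity $\varepsilon\in(0,1]$ has VC-dimension at most $C/\varepsilon^2$ (independently of the dimension $N$).
   Context: A trigraph is $T=(V,E,R)$ where $V$ is a finite vertex set, $E$ (plain edges) and $R$ (red edges) are disjoint sets of unordered pairs of distinct vertices; $N[v]$ is $v$ together with its plain neighbours and $R(v)$ its red neighbours. A set $X\subseteq V$ is shattered if there is a set $S$ of $2^{|X|}$ vertices, none having a red neighbour in $X$, such that for every $Y\subseteq X$ some $v_Y\in S$ has $N[v_Y]\cap X=Y$; the VC-dimension is the largest size of a shattered set. A Hamming-trigraph with threshold $\tau$ and sensitivity $\varepsilon$ is a trigraph with $V\subseteq\{0,1\}^N$ for some $N$, $E=\{uv:d_H(u,v)\leq\tau N\}$ and $R=\{uv:\tau N<d_H(u,v)\leq(\tau+\varepsilon)N\}$, where $d_H$ is Hamming distance. *)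

theory Defs
  imports Complex_Main
begin

definition trigraph :: "'a set \<Rightarrow> 'a set set \<Rightarrow> 'a set set \<Rightarrow> bool" where
  "trigraph V E R \<longleftrightarrow> finite V
     \<and> E \<subseteq> {{u, v} | u v. u \<in> V \<and> v \<in> V \<and> u \<noteq> v}
     \<and> R \<subseteq> {{u, v} | u v. u \<in> V \<and> v \<in> V \<and> u \<noteq> v}
     \<and> E \<inter> R = {}"

definition closed_nbhd :: "'a set set \<Rightarrow> 'a \<Rightarrow> 'a set" where
  "closed_nbhd E v = insert v {u. {u, v} \<in> E}"

definition red_nbhd :: "'a set set \<Rightarrow> 'a \<Rightarrow> 'a set" where
  "red_nbhd R v = {u. {u, v} \<in> R}"

definition shattered :: "'a set \<Rightarrow> 'a set set \<Rightarrow> 'a set set \<Rightarrow> 'a set \<Rightarrow> bool" where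
  "shattered V E R X \<longleftrightarrow> X \<subseteq> V \<and>
     (\<exists>S \<subseteq> V. card S = 2 ^ card X
        \<and> (\<forall>v \<in> S. red_nbhd R v \<inter> X = {})
        \<and> (\<forall>Y \<subseteq> X. \<exists>v \<in> S. closed_nbhd E v \<inter> X = Y))"

text \<open>VC-dimension: the largest size of a shattered set (0 if there is none;
  on nat, Sup of the empty set is 0 and Sup of a finite set is its Max).\<close>
definition vc_dim :: "'a set \<Rightarrow> 'a set set \<Rightarrow> 'a set set \<Rightarrow> nat" where
  "vc_dim V E R = Sup (card ` {X. shattered V E R X})"

text \<open>Vertices of {0,1}^N are boolean lists of length N.\<close>
definition hamming :: "bool list \<Rightarrow> bool list \<Rightarrow> nat" where
  "hamming u v = card {i. i < length u \<and> u ! i \<noteq> v ! i}"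

definition hamming_trigraph ::
  "nat \<Rightarrow> real \<Rightarrow> real \<Rightarrow> bool list set \<Rightarrow> bool list set set \<Rightarrow> bool list set set \<Rightarrow> bool" where
  "hamming_trigraph N \<tau> \<epsilon> V E R \<longleftrightarrow>
     (\<forall>v \<in> V. length v = N)
     \<and> E = {{u, v} | u v. u \<in> V \<and> v \<in> V \<and> u \<noteq> v \<and> real (hamming u v) \<le> \<tau> * real N}
     \<and> R = {{u, v} | u v. u \<in> V \<and> v \<in> V \<and> u \<noteq> v \<and>
              \<tau> * real N < real (hamming u v) \<and> real (hamming u v) \<le> (\<tau> + \<epsilon>) * real N}"

end

theory Submission imports Defs "HOL-Analysis.Convex" begin

lemma ham_sym: "length u = length v \<Longrightarrow> hamming u v = hamming v u"
  unfolding hamming_def by (metis)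

lemma ham_sum: "length u = N \<Longrightarrow> int (hamming u v) = (\<Sum>i<N. of_bool (u!i \<noteq> v!i))"
proof -
  assume "length u = N"
  then have "{i. i < length u \<and> u ! i \<noteq> v ! i} = {i\<in>{..<N}. u!i \<noteq> v!i}" by auto
  then show ?thesis unfolding hamming_def
    by (simp add: sum.If_cases[of "{..<N}" "\<lambda>i. u!i \<noteq> v!i" "\<lambda>_. 1" "\<lambda>_. 0"] Int_def)
qed

lemma ham_self: "hamming u u = 0"
  unfolding hamming_def by simp

lemma E_iff:
  assumes "hamming_trigraph N \<tau> \<epsilon> V E R" "c \<in> V" "x \<in> V" "x \<noteq> c"
  shows "{x, c} \<in> E \<longleftrightarrow> real (hamming c x) \<le> \<tau> * real N"
proof -
  have L: "length c = length x" using assms unfolding hamming_trigraph_def by auto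
  show ?thesis using assms(1,2,3,4) ham_sym[OF L] unfolding hamming_trigraph_def
    by (auto simp: doubleton_eq_iff)
qed

lemma R_iff:
  assumes "hamming_trigraph N \<tau> \<epsilon> V E R" "c \<in> V" "x \<in> V" "x \<noteq> c"
  shows "{x, c} \<in> R \<longleftrightarrow> \<tau> * real N < real (hamming c x) \<and> real (hamming c x) \<le> (\<tau> + \<epsilon>) * real N"
proof -
  have L: "length c = length x" using assms unfolding hamming_trigraph_def by auto
  show ?thesis using assms(1,2,3,4) ham_sym[OF L] unfolding hamming_trigraph_def
    by (auto simp: doubleton_eq_iff)
qed

lemma greedy:
  fixes f :: "nat \<Rightarrow> nat \<Rightarrow> int"
  assumes "\<And>j i. \<bar>f j i\<bar> \<le> 1"
  shows "\<exists>s. (\<forall>j. s j = 1 \<or> s j = -1) \<and> (\<Sum>i<N. (\<Sum>j<m. s j * f j i)^2) \<le> int m * int N"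
proof (induction m)
  case 0
  show ?case by (rule exI[of _ "\<lambda>_. 1"]) simp
next
  case (Suc m)
  then obtain s where s: "\<forall>j. s j = 1 \<or> s j = -1" "(\<Sum>i<N. (\<Sum>j<m. s j * f j i)^2) \<le> int m * int N"
    by blast
  define W where "W i = (\<Sum>j<m. s j * f j i)" for i
  define t :: int where "t = (if (\<Sum>i<N. W i * f m i) \<le> 0 then 1 else -1)"
  define s' where "s' = s(m := t)"
  have t2: "t * t = 1" and tc: "t * (\<Sum>i<N. W i * f m i) \<le> 0" unfolding t_def by auto
  have sq: "(f m i)^2 \<le> 1" for i
    using assms[of m i] by (simp add: abs_square_le_1)
  have "(\<Sum>j<Suc m. s' j * f j i) = W i + t * f m i" for i
    unfolding W_def s'_def by simp
  then have "(\<Sum>i<N. (\<Sum>j<Suc m. s' j * f j i)^2) = (\<Sum>i<N. (W i)^2) + 2 * (t * (\<Sum>i<N. W i * f m i)) + (\<Sum>i<N. (t*t) * (f m i)^2)"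
    by (simp add: power2_eq_square algebra_simps sum.distrib sum_distrib_left)
  also have "\<dots> \<le> int m * int N + 0 + (\<Sum>i<N. 1)"
    using s(2) tc sq unfolding W_def t2 by (intro add_mono sum_mono) auto
  also have "\<dots> = int (Suc m) * int N" by (simp add: algebra_simps)
  finally have fin: "(\<Sum>i<N. (\<Sum>j<Suc m. s' j * f j i)^2) \<le> int (Suc m) * int N" .
  have "\<forall>j. s' j = 1 \<or> s' j = -1" using s(1) unfolding s'_def t_def by auto
  with fin show ?case by blast
qed

lemma key:
  assumes H: "hamming_trigraph N \<tau> \<epsilon> V E R" and tN: "\<tau> * real N \<ge> 0" and ep: "0 < \<epsilon>"
    and sh: "shattered V E R X"
  shows "real (card X div 2) * \<epsilon>^2 < 1"
proof (cases "card X div 2 = 0")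
  case True then show ?thesis by simp
next
  case False
  define m where "m = card X div 2"
  have m0: "m > 0" using False m_def by simp
  have finX: "finite X" using False card.infinite by fastforce
  obtain xs where xs: "set xs = X" "distinct xs" using finite_distinct_list[OF finX] by blast
  have lxs: "length xs = card X" using xs distinct_card by fastforce
  have m2: "2 * m \<le> length xs" using lxs m_def by simp
  define a where "a j = xs ! (2*j)" for j
  define b where "b j = xs ! (2*j+1)" for j
  have aX: "a j \<in> X" if "j < m" for j using that m2 xs(1) unfolding a_def by auto
  have bX: "b j \<in> X" if "j < m" for j using that m2 xs(1) unfolding b_def by auto
  have ab: "a j \<noteq> b k" if "j < m" "k < m" for j k
    using that m2 xs(2) nth_eq_iff_index_eq[OF xs(2), of "2*j" "2*k+1"] unfolding a_def b_def by (auto; presburger)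
  have bb: "b j = b k \<Longrightarrow> j = k" if "j < m" "k < m" for j k
    using that m2 xs(2) nth_eq_iff_index_eq[OF xs(2), of "2*j+1" "2*k+1"] unfolding b_def by auto
  have aa: "a j = a k \<Longrightarrow> j = k" if "j < m" "k < m" for j k
    using that m2 xs(2) nth_eq_iff_index_eq[OF xs(2), of "2*j" "2*k"] unfolding a_def by auto
  define f :: "nat \<Rightarrow> nat \<Rightarrow> int" where "f j i = of_bool (b j ! i) - of_bool (a j ! i)" for j i
  have fb: "\<bar>f j i\<bar> \<le> 1" for j i unfolding f_def by auto
  obtain s where s: "\<forall>j. s j = 1 \<or> s j = -1" "(\<Sum>i<N. (\<Sum>j<m. s j * f j i)^2) \<le> int m * int N"
    using greedy[where f=f and N=N and m=m, OF fb] by auto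
  define Y where "Y = {x. \<exists>j<m. (s j = 1 \<and> x = a j) \<or> (s j \<noteq> 1 \<and> x = b j)}"
  have YX: "Y \<subseteq> X" unfolding Y_def using aX bX by auto
  have sh': "X \<subseteq> V \<and> (\<exists>S \<subseteq> V. card S = 2 ^ card X
        \<and> (\<forall>v \<in> S. red_nbhd R v \<inter> X = {})
        \<and> (\<forall>Y \<subseteq> X. \<exists>v \<in> S. closed_nbhd E v \<inter> X = Y))"
    using sh unfolding shattered_def .
  have XV: "X \<subseteq> V" using sh' by (rule conjunct1)
  obtain S where S0: "S \<subseteq> V \<and> card S = 2 ^ card X
        \<and> (\<forall>v \<in> S. red_nbhd R v \<inter> X = {})
        \<and> (\<forall>Y \<subseteq> X. \<exists>v \<in> S. closed_nbhd E v \<inter> X = Y)"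
    using conjunct2[OF sh'] by (rule exE)
  then have S: "S \<subseteq> V" "\<forall>v \<in> S. red_nbhd R v \<inter> X = {}"
      "\<forall>Y \<subseteq> X. \<exists>v \<in> S. closed_nbhd E v \<inter> X = Y" by simp_all
  obtain c where cS: "c \<in> S" "closed_nbhd E c \<inter> X = Y"
    using S(3) YX by blast
  have c: "c \<in> V" "red_nbhd R c \<inter> X = {}" "closed_nbhd E c \<inter> X = Y"
    using cS S(1,2) by auto
  have lc: "length c = N" using H c(1) unfolding hamming_trigraph_def by auto
  define p where "p j = (if s j = 1 then a j else b j)" for j
  define q where "q j = (if s j = 1 then b j else a j)" for j
  have pY: "p j \<in> Y" if "j < m" for j using that unfolding p_def Y_def by auto
  have qX: "q j \<in> X" if "j < m" for j using that aX bX unfolding q_def by auto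
  have qY: "q j \<notin> Y" if "j < m" for j
  proof
    assume "q j \<in> Y"
    then obtain k where k: "k < m" "(s k = 1 \<and> q j = a k) \<or> (s k \<noteq> 1 \<and> q j = b k)"
      unfolding Y_def by auto
    show False
    proof (cases "s j = 1")
      case True
      then show ?thesis using k ab[OF k(1) that] bb[OF that k(1)] unfolding q_def by auto
    next
      case False
      then show ?thesis using k ab[OF that k(1)] aa[OF that k(1)] unfolding q_def by auto
    qed
  qed
  have far: "real (hamming c x) > (\<tau> + \<epsilon>) * real N" if "x \<in> X" "x \<notin> Y" for x
  proof -
    have "x \<notin> closed_nbhd E c" using c(3) that by auto
    then have xc: "x \<noteq> c" "{x, c} \<notin> E" unfolding closed_nbhd_def by auto
    have "x \<notin> red_nbhd R c" using c(2) that by auto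
    then have "{x, c} \<notin> R" unfolding red_nbhd_def by auto
    moreover have xV: "x \<in> V" using that(1) XV by auto
    ultimately have h1: "\<not> real (hamming c x) \<le> \<tau> * real N"
      and h2: "\<not> (\<tau> * real N < real (hamming c x) \<and> real (hamming c x) \<le> (\<tau> + \<epsilon>) * real N)"
      using E_iff[OF H c(1) xV xc(1)] R_iff[OF H c(1) xV xc(1)] xc(2) by auto
    then show ?thesis by linarith
  qed
  have near: "real (hamming c x) \<le> \<tau> * real N" if "x \<in> Y" for x
  proof (cases "x = c")
    case True then show ?thesis using tN ham_self by simp
  next
    case False
    have "x \<in> closed_nbhd E c" "x \<in> X" using c(3) that by auto
    then have "{x, c} \<in> E" using False unfolding closed_nbhd_def by auto
    then show ?thesis using E_iff[OF H c(1) _ False] \<open>x \<in> X\<close> XV by auto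
  qed
  have dj: "real (hamming c (q j)) - real (hamming c (p j)) > \<epsilon> * real N" if "j < m" for j
    using far[OF qX[OF that] qY[OF that]] near[OF pY[OF that]] by (simp add: algebra_simps)
  have "(\<Sum>j<m. \<epsilon> * real N) < (\<Sum>j<m. real (hamming c (q j)) - real (hamming c (p j)))"
    using m0 dj by (intro sum_strict_mono) auto
  then have lower: "real m * \<epsilon> * real N < (\<Sum>j<m. real (hamming c (q j)) - real (hamming c (p j)))"
    by simp
  define g :: "nat \<Rightarrow> int" where "g i = (if c ! i then -1 else 1)" for i
  have coord: "int (hamming c (b j)) - int (hamming c (a j)) = (\<Sum>i<N. g i * f j i)" for j
  proof -
    have "int (hamming c (b j)) - int (hamming c (a j)) =
        (\<Sum>i<N. of_bool (c!i \<noteq> b j!i) - of_bool (c!i \<noteq> a j!i))"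
      using ham_sum[OF lc] by (simp add: sum_subtractf)
    also have "\<dots> = (\<Sum>i<N. g i * f j i)"
      by (rule sum.cong) (auto simp: g_def f_def)
    finally show ?thesis .
  qed
  have qp: "int (hamming c (q j)) - int (hamming c (p j)) = s j * (\<Sum>i<N. g i * f j i)" for j
    using s(1) coord[of j] unfolding p_def q_def by (cases "s j = 1") auto
  define w where "w i = (\<Sum>j<m. s j * f j i)" for i
  have "(\<Sum>j<m. int (hamming c (q j)) - int (hamming c (p j))) = (\<Sum>j<m. \<Sum>i<N. s j * (g i * f j i))"
    by (simp add: qp sum_distrib_left)
  also have "\<dots> = (\<Sum>i<N. g i * w i)"
    unfolding w_def sum_distrib_left by (subst sum.swap) (simp add: algebra_simps)
  also have "\<dots> \<le> (\<Sum>i<N. \<bar>w i\<bar>)"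
    by (intro sum_mono) (auto simp: g_def)
  finally have D: "(\<Sum>j<m. int (hamming c (q j)) - int (hamming c (p j))) \<le> (\<Sum>i<N. \<bar>w i\<bar>)" .
  define A where "A = (\<Sum>i<N. \<bar>real_of_int (w i)\<bar>)"
  have "(\<Sum>j<m. real (hamming c (q j)) - real (hamming c (p j))) \<le> A"
  proof -
    have "real_of_int (\<Sum>j<m. int (hamming c (q j)) - int (hamming c (p j))) \<le> real_of_int (\<Sum>i<N. \<bar>w i\<bar>)"
      using D by (simp only: of_int_le_iff)
    then show ?thesis unfolding A_def by (simp add: of_int_sum)
  qed
  with lower have lt: "real m * \<epsilon> * real N < A" by linarith
  have "A^2 \<le> (\<Sum>i<N. (\<bar>real_of_int (w i)\<bar>)^2) * card {..<N::nat}"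
    unfolding A_def by (rule sum_squared_le_sum_of_squares)
  also have "\<dots> = real_of_int (\<Sum>i<N. (w i)^2) * real N"
    by (simp only: power2_abs card_lessThan of_int_sum of_int_power)
  also have "\<dots> \<le> (real m * real N) * real N"
  proof (rule mult_right_mono)
    have "real_of_int (\<Sum>i<N. (w i)^2) \<le> real_of_int (int m * int N)"
      using s(2) unfolding w_def by (simp only: of_int_le_iff)
    then show "real_of_int (\<Sum>i<N. (w i)^2) \<le> real m * real N" by simp
  qed simp
  finally have up: "A^2 \<le> real m * real N * real N" .
  have nn: "0 \<le> real m * \<epsilon> * real N" using ep by simp
  have "(real m * \<epsilon> * real N)^2 < A^2"
    using lt nn by (intro power_strict_mono) auto
  with up have main: "(real m * real N * real N) * (real m * \<epsilon>^2) < (real m * real N * real N) * 1"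
    by (simp add: power2_eq_square algebra_simps)
  then have pos: "real m * real N * real N > 0"
  proof -
    have "real m * real N * real N \<noteq> 0"
    proof
      assume z: "real m * real N * real N = 0"
      show False using main unfolding z by simp
    qed
    moreover have "real m * real N * real N \<ge> 0" by simp
    ultimately show ?thesis by linarith
  qed
  have "real m * \<epsilon>^2 < 1"
    using mult_less_cancel_left_pos[of "real m * real N * real N" "real m * \<epsilon>^2" 1] pos main
    by linarith
  then show ?thesis unfolding m_def .
qed

lemma bound:
  assumes H: "hamming_trigraph N \<tau> \<epsilon> V E R" and ep: "0 < \<epsilon>" "\<epsilon> \<le> 1"
    and sh: "shattered V E R X"
  shows "real (card X) \<le> 3 / \<epsilon>^2"
proof -
  have e2: "0 < \<epsilon>^2" using ep by simp
  have e21: "\<epsilon>^2 \<le> 1" using ep by (simp add: power_le_one)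
  have one: "1 \<le> 1 / \<epsilon>^2" using e2 e21 by (simp add: divide_simps)
  show ?thesis
  proof (cases "\<tau> * real N \<ge> 0")
    case True
    define m where "m = card X div 2"
    have "real m * \<epsilon>^2 < 1" using key[OF H True ep(1) sh] unfolding m_def .
    then have "real m < 1 / \<epsilon>^2" using e2 by (simp add: divide_simps)
    moreover have "real (card X) \<le> 2 * real m + 1" unfolding m_def by linarith
    ultimately have "real (card X) < 2 * (1 / \<epsilon>^2) + 1 / \<epsilon>^2" using one by linarith
    then show ?thesis by simp
  next
    case False
    have "card X \<le> 1"
    proof (rule ccontr)
      assume "\<not> card X \<le> 1"
      then obtain x y where xy: "x \<in> X" "y \<in> X" "x \<noteq> y"
        by (metis One_nat_def card.infinite card_le_Suc0_iff_eq not_le_imp_less order.refl less_imp_le zero_le_one)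
      have sh': "X \<subseteq> V \<and> (\<exists>S \<subseteq> V. card S = 2 ^ card X
          \<and> (\<forall>v \<in> S. red_nbhd R v \<inter> X = {})
          \<and> (\<forall>Y \<subseteq> X. \<exists>v \<in> S. closed_nbhd E v \<inter> X = Y))"
        using sh unfolding shattered_def .
      have XV: "X \<subseteq> V" using sh' by (rule conjunct1)
      obtain S where S0: "S \<subseteq> V \<and> card S = 2 ^ card X
          \<and> (\<forall>v \<in> S. red_nbhd R v \<inter> X = {})
          \<and> (\<forall>Y \<subseteq> X. \<exists>v \<in> S. closed_nbhd E v \<inter> X = Y)"
        using conjunct2[OF sh'] by (rule exE)
      then have S: "S \<subseteq> V" "\<forall>Y \<subseteq> X. \<exists>v \<in> S. closed_nbhd E v \<inter> X = Y" by simp_all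
      obtain c where c: "c \<in> S" "closed_nbhd E c \<inter> X = X" using S(2) by blast
      have cV: "c \<in> V" using c S(1) by auto
      obtain z where z: "z \<in> X" "z \<noteq> c" using xy by metis
      have "z \<in> closed_nbhd E c" using c(2) z(1) by auto
      then have "{z, c} \<in> E" using z(2) unfolding closed_nbhd_def by auto
      then have "real (hamming c z) \<le> \<tau> * real N" using E_iff[OF H cV _ z(2)] z(1) XV by auto
      then show False using False by simp
    qed
    then have "real (card X) \<le> 1" by simp
    also have "1 \<le> 3 / \<epsilon>^2" using one e2 by (simp add: divide_simps)
    finally show ?thesis .
  qed
qed

theorem theorem4p1:
  shows "\<exists>C > (0::real). \<forall>(N::nat) (\<tau>::real) (\<epsilon>::real) V E R.
           0 < \<epsilon> \<and> \<epsilon> \<le> 1 \<and> hamming_trigraph N \<tau> \<epsilon> V E R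
           \<longrightarrow> real (vc_dim V E R) \<le> C / \<epsilon> ^ 2"
proof (intro exI[of _ 3] conjI allI impI)
  fix N :: nat and \<tau> \<epsilon> :: real and V :: "bool list set" and E R
  assume a: "0 < \<epsilon> \<and> \<epsilon> \<le> 1 \<and> hamming_trigraph N \<tau> \<epsilon> V E R"
  define K where "K = card ` {X. shattered V E R X}"
  define B where "B = nat \<lfloor>3 / \<epsilon>^2\<rfloor>"
  have KB: "k \<le> B" if "k \<in> K" for k
  proof -
    obtain X where X: "shattered V E R X" "k = card X" using \<open>k \<in> K\<close> unfolding K_def by auto
    have "real k \<le> 3 / \<epsilon>^2" using bound[of N \<tau> \<epsilon> V E R X] a X by auto
    then show ?thesis unfolding B_def by (simp add: le_nat_floor)
  qed
  have "Sup K \<le> B"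
  proof (cases "K = {}")
    case True then show ?thesis by simp
  next
    case False then show ?thesis using KB by (intro cSup_least) auto
  qed
  then have "real (vc_dim V E R) \<le> real B" unfolding vc_dim_def K_def by simp
  also have "real B \<le> 3 / \<epsilon>^2" unfolding B_def using a
    by (simp add: of_nat_floor)
  finally show "real (vc_dim V E R) \<le> 3 / \<epsilon>^2" .
qed simp

end
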